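(* Let $T$ be a tree, with all vertex capacities equal to $1$, given a rooted planar embedding whose root is a leaf, and let $E$ be the set of edges from each non-leaf vertex to its first child (in the planar order). Then the tree associated to $(T,E)$ has distributable capacity. Moreover, if $E'$ is any set of edges of $T$ with $E'\cap E=\emptyset$ and $U$ is a connected component of the forest obtained by deleting $E'$ from $T$, then the tree associated to $(U,E\cap E(U))$ also has distributable capacity.
   Context: For a tree $T$ with vertex capacities $\mathrm{cap}(v)$ and a subset $E$ of its edges, the tree associated to $(T,E)$ is the tree whose vertices are the connected components of the forest obtained from $T$ by deleting the edges in $E$, whose edges are the edges of $E$, and in which the capacity of a component is the sum of the capacities of its vertices. A tree with capacities has distributable capacity if every vertex $v$ satisfies $\mathrm{cap}(v)\ge\deg(v)-1$. *)

theory Defs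
  imports Main
begin

definition graph :: "'a set \<Rightarrow> 'a set set \<Rightarrow> bool" where
  "graph V F \<longleftrightarrow> finite V \<and> (\<forall>e\<in>F. e \<subseteq> V \<and> card e = 2)"

definition adj :: "'a set set \<Rightarrow> ('a \<times> 'a) set" where
  "adj F = {(x, y). {x, y} \<in> F}"

definition connected_in :: "'a set set \<Rightarrow> 'a \<Rightarrow> 'a \<Rightarrow> bool" where
  "connected_in F x y \<longleftrightarrow> (x, y) \<in> (adj F)\<^sup>*"

definition comps :: "'a set \<Rightarrow> 'a set set \<Rightarrow> 'a set set" where
  "comps V F = V // {(x, y). x \<in> V \<and> y \<in> V \<and> connected_in F x y}"

definition is_tree :: "'a set \<Rightarrow> 'a set set \<Rightarrow> bool" where
  "is_tree V F \<longleftrightarrow> graph V F \<and> V \<noteq> {} \<and>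
     (\<forall>x\<in>V. \<forall>y\<in>V. connected_in F x y) \<and>
     (\<forall>x y. {x, y} \<in> F \<longrightarrow> \<not> connected_in (F - {{x, y}}) x y)"

definition deg :: "'a set set \<Rightarrow> 'a \<Rightarrow> nat" where
  "deg F v = card {e \<in> F. v \<in> e}"

definition child_of :: "'a set set \<Rightarrow> 'a \<Rightarrow> 'a \<Rightarrow> 'a \<Rightarrow> bool" where
  "child_of F r u v \<longleftrightarrow> {u, v} \<in> F \<and> connected_in (F - {{u, v}}) r v"

text \<open>A rooted planar embedding of the tree (V,F) with root r: for each vertex,
a linear order (list without repetitions) of its children.\<close>
definition planar_rooted :: "'a set \<Rightarrow> 'a set set \<Rightarrow> 'a \<Rightarrow> ('a \<Rightarrow> 'a list) \<Rightarrow> bool" where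
  "planar_rooted V F r ch \<longleftrightarrow> r \<in> V \<and>
     (\<forall>v\<in>V. distinct (ch v) \<and> set (ch v) = {u. child_of F r u v})"

definition first_child_edges :: "'a set \<Rightarrow> 'a set set \<Rightarrow> ('a \<Rightarrow> 'a list) \<Rightarrow> 'a set set" where
  "first_child_edges V F ch = {{v, hd (ch v)} | v. v \<in> V \<and> deg F v \<ge> 2}"

text \<open>The tree associated to ((V,F),E) with capacities cap has distributable capacity:
its vertices are the components C of (V, F - E), the capacity of C is the sum of the
capacities of its vertices, and its degree is the number of edges of E incident to C
(edges of E join distinct components since (V,F) is a tree).\<close>
definition assoc_distributable :: "'a set \<Rightarrow> 'a set set \<Rightarrow> 'a set set \<Rightarrow> ('a \<Rightarrow> int) \<Rightarrow> bool" where
  "assoc_distributable V F E cap \<longleftrightarrow>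
     (\<forall>C\<in>comps V (F - E). sum cap C \<ge> int (card {e \<in> E. e \<inter> C \<noteq> {}}) - 1)"

end

theory Submission
  imports Defs
begin

lemma conn_refl: "connected_in F x x"
  by (simp add: connected_in_def)

lemma conn_sym: assumes "connected_in F x y" shows "connected_in F y x"
proof -
  have "(adj F)\<inverse> = adj F" by (auto simp: adj_def insert_commute)
  then have "(x,y) \<in> ((adj F)\<inverse>)\<^sup>*" using assms by (simp add: connected_in_def)
  then show ?thesis by (simp add: connected_in_def rtrancl_converse)
qed

lemma conn_trans: "connected_in F x y \<Longrightarrow> connected_in F y z \<Longrightarrow> connected_in F x z"
  by (simp add: connected_in_def)

lemma conn_mono: assumes "F \<subseteq> G" "connected_in F x y" shows "connected_in G x y"
proof -
  have "adj F \<subseteq> adj G" using assms(1) by (auto simp: adj_def)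
  then show ?thesis using assms(2) unfolding connected_in_def using rtrancl_mono by blast
qed

lemma conn_edge: "{x,y} \<in> F \<Longrightarrow> connected_in F x y"
  by (simp add: connected_in_def adj_def r_into_rtrancl)

lemma conn_split:
  assumes "connected_in G x y"
  shows "connected_in (G - {{a,b}}) x y \<or> (connected_in (G - {{a,b}}) x a \<and> connected_in (G - {{a,b}}) b y)
     \<or> (connected_in (G - {{a,b}}) x b \<and> connected_in (G - {{a,b}}) a y)"
  using assms unfolding connected_in_def
proof (induction rule: rtrancl_induct)
  case base thus ?case by simp
next
  case (step y z)
  have e: "{y,z} \<in> G" using step(2) by (simp add: adj_def)
  show ?case
  proof (cases "{y,z} = {a,b}")
    case True
    then have "(y = a \<and> z = b) \<or> (y = b \<and> z = a)" by (simp add: doubleton_eq_iff)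
    then show ?thesis using step(3) conn_trans[of "G - {{a,b}}"] conn_sym[of "G - {{a,b}}"]
        conn_refl[of "G - {{a,b}}"] unfolding connected_in_def by metis
  next
    case False
    then have "connected_in (G - {{a,b}}) y z" using e conn_edge[of y z "G - {{a,b}}"] by auto
    then show ?thesis using step(3) conn_trans[of "G - {{a,b}}"] unfolding connected_in_def by metis
  qed
qed

lemma K:
  assumes br: "\<forall>x y. {x,y} \<in> F \<longrightarrow> \<not> connected_in (F - {{x,y}}) x y"
  and f1: "{c1,p1} \<in> F" and f2: "{c2,p2} \<in> F" and ne: "{c1,p1} \<noteq> {c2,p2}"
  and H1: "connected_in (F - {{c1,p1}}) r p1" and H2: "connected_in (F - {{c2,p2}}) r p2"
  and H3: "connected_in (F - {{c1,p1},{c2,p2}}) c1 c2"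
  shows False
proof -
  define R where "R = connected_in (F - {{c1,p1},{c2,p2}})"
  define S1 where "S1 = connected_in (F - {{c1,p1}})"
  define S2 where "S2 = connected_in (F - {{c2,p2}})"
  have eq1: "F - {{c1,p1}} - {{c2,p2}} = F - {{c1,p1},{c2,p2}}" by auto
  have eq2: "F - {{c2,p2}} - {{c1,p1}} = F - {{c1,p1},{c2,p2}}" by auto
  have RS1: "R x y \<Longrightarrow> S1 x y" for x y unfolding R_def S1_def by (rule conn_mono) auto
  have RS2: "R x y \<Longrightarrow> S2 x y" for x y unfolding R_def S2_def by (rule conn_mono) auto
  have B1: "\<not> S1 c1 p1" using br f1 unfolding S1_def by blast
  have B2: "\<not> S2 c2 p2" using br f2 unfolding S2_def by blast
  have E1: "S2 c1 p1" unfolding S2_def using f1 ne by (intro conn_edge) auto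
  have E2: "S1 c2 p2" unfolding S1_def using f2 ne by (intro conn_edge) auto
  have s1t: "S1 x y \<Longrightarrow> S1 y z \<Longrightarrow> S1 x z" for x y z unfolding S1_def by (rule conn_trans)
  have s2t: "S2 x y \<Longrightarrow> S2 y z \<Longrightarrow> S2 x z" for x y z unfolding S2_def by (rule conn_trans)
  have s1s: "S1 x y \<Longrightarrow> S1 y x" for x y unfolding S1_def by (rule conn_sym)
  have s2s: "S2 x y \<Longrightarrow> S2 y x" for x y unfolding S2_def by (rule conn_sym)
  have Rt: "R x y \<Longrightarrow> R y z \<Longrightarrow> R x z" for x y z unfolding R_def by (rule conn_trans)
  have Rs: "R x y \<Longrightarrow> R y x" for x y unfolding R_def by (rule conn_sym)
  have h3: "R c1 c2" using H3 R_def by simp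
  have h1: "S1 r p1" using H1 S1_def by simp
  have sp1: "R r p1 \<or> (R r c2 \<and> R p2 p1) \<or> (R r p2 \<and> R c2 p1)"
    using conn_split[OF H1, of c2 p2] unfolding eq1 R_def .
  have sp2: "R r p2 \<or> (R r c1 \<and> R p1 p2) \<or> (R r p1 \<and> R c1 p2)"
    using conn_split[OF H2, of c1 p1] unfolding eq2 R_def .
  show False
  proof -
    { assume a: "R r p1 \<and> R r p2"
      have "S2 c2 p2" using a h3 E1 by (meson RS2 Rs s2t)
      with B2 have False by simp }
    moreover
    { assume a: "R r p1 \<and> R r c1"
      have "S1 c1 p1" using a by (meson RS1 Rs s1t)
      with B1 have False by simp }
    moreover
    { assume a: "R c1 p2"
      have "S2 c2 p2" using a h3 by (meson RS2 Rs s2t)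
      with B2 have False by simp }
    moreover
    { assume a: "R r c2"
      have "S1 c1 p1" using a h1 h3 by (meson RS1 Rs s1t s1s)
      with B1 have False by simp }
    moreover
    { assume a: "R c2 p1"
      have "S1 c1 p1" using a h3 by (meson RS1 Rs s1t)
      with B1 have False by simp }
    ultimately show False using sp1 sp2 by blast
  qed
qed


lemma tree_br: "is_tree V F \<Longrightarrow> \<forall>x y. {x,y} \<in> F \<longrightarrow> \<not> connected_in (F - {{x,y}}) x y"
  by (simp add: is_tree_def)

lemma dichot:
  assumes tree: "is_tree V F" and rV: "r \<in> V" and vV: "v \<in> V" and e: "{v,u} \<in> F"
  shows "child_of F r u v \<or> child_of F r v u"
proof -
  have "connected_in F r v" using tree rV vV by (simp add: is_tree_def)
  from conn_split[OF this, of v u]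
  have "connected_in (F - {{v,u}}) r v \<or> connected_in (F - {{v,u}}) r u"
    by auto
  then show ?thesis using e unfolding child_of_def by (auto simp: insert_commute)
qed

lemma hd_child:
  assumes tree: "is_tree V F" and emb: "planar_rooted V F r ch" and vV: "v \<in> V"
    and d: "2 \<le> deg F v"
  shows "child_of F r (hd (ch v)) v"
proof -
  have rV: "r \<in> V" and chs: "set (ch v) = {u. child_of F r u v}"
    using emb vV by (auto simp: planar_rooted_def)
  have "\<exists>u. child_of F r u v"
  proof (rule ccontr)
    assume nc: "\<not> (\<exists>u. child_of F r u v)"
    have fin: "finite {e \<in> F. v \<in> e}"
    proof -
      have "finite V" using tree by (simp add: is_tree_def graph_def)
      moreover have "{e \<in> F. v \<in> e} \<subseteq> Pow V" using tree by (auto simp: is_tree_def graph_def)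
      ultimately show ?thesis by (meson finite_Pow_iff finite_subset)
    qed
    have "1 < card {e \<in> F. v \<in> e}" using d by (simp add: deg_def)
    then obtain e1 e2 where e12: "e1 \<in> F" "v \<in> e1" "e2 \<in> F" "v \<in> e2" "e1 \<noteq> e2"
    proof -
      have "\<not> card {e \<in> F. v \<in> e} \<le> Suc 0" using \<open>1 < card {e \<in> F. v \<in> e}\<close> by simp
      then have "\<not> (\<forall>a1\<in>{e \<in> F. v \<in> e}. \<forall>a2\<in>{e \<in> F. v \<in> e}. a1 = a2)"
        using card_le_Suc0_iff_eq[OF fin] by simp
      then show ?thesis using that by blast
    qed
    have c2: "card e1 = 2" "card e2 = 2" using tree e12 by (auto simp: is_tree_def graph_def)
    obtain u1 where u1: "e1 = {v,u1}" using c2(1) e12(2) by (auto simp: card_2_iff) 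
    obtain u2 where u2: "e2 = {v,u2}" using c2(2) e12(4) by (auto simp: card_2_iff)
    have p1: "child_of F r v u1" using dichot[OF tree rV vV, of u1] e12 u1 nc by auto
    have p2: "child_of F r v u2" using dichot[OF tree rV vV, of u2] e12 u2 nc by auto
    show False
      using K[OF tree_br[OF tree], of v u1 v u2 r, OF _ _ _ _ _ conn_refl] p1 p2 e12 u1 u2
      unfolding child_of_def by auto
  qed
  then have "ch v \<noteq> []" using chs by auto
  then have "hd (ch v) \<in> set (ch v)" by simp
  then show ?thesis using chs by auto
qed


lemma fce_image: "first_child_edges V F ch = (\<lambda>v. {v, hd (ch v)}) ` {v \<in> V. 2 \<le> deg F v}"
  by (auto simp: first_child_edges_def)

lemma count_lemma:
  assumes tree: "is_tree V F" and emb: "planar_rooted V F r ch"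
    and CV: "C \<subseteq> V"
    and conC: "\<forall>x\<in>C. \<forall>y\<in>C. connected_in (F - first_child_edges V F ch) x y"
  shows "card {e \<in> first_child_edges V F ch. e \<inter> C \<noteq> {}} \<le> card C + 1"
proof -
  define E where "E = first_child_edges V F ch"
  have finV: "finite V" using tree by (simp add: is_tree_def graph_def)
  have finC: "finite C" using CV finV finite_subset by blast
  have finE: "finite E" unfolding E_def fce_image using finV by simp
  define D where "D = (\<lambda>v. {v, hd (ch v)}) ` {v \<in> C. 2 \<le> deg F v}"
  define Up where "Up = {e \<in> E. \<exists>v. v \<in> V \<and> 2 \<le> deg F v \<and> v \<notin> C \<and> hd (ch v) \<in> C \<and> e = {v, hd (ch v)}}"
  have sub: "{e \<in> E. e \<inter> C \<noteq> {}} \<subseteq> D \<union> Up"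
  proof
    fix e assume "e \<in> {e \<in> E. e \<inter> C \<noteq> {}}"
    then have eE: "e \<in> E" and ne: "e \<inter> C \<noteq> {}" by auto
    then obtain v where v: "v \<in> V" "2 \<le> deg F v" "e = {v, hd (ch v)}"
      unfolding E_def fce_image by auto
    show "e \<in> D \<union> Up"
    proof (cases "v \<in> C")
      case True then show ?thesis using v unfolding D_def by auto
    next
      case False
      then have "hd (ch v) \<in> C" using ne v by auto
      then show ?thesis using False v eE unfolding Up_def by auto
    qed
  qed
  have cD: "card D \<le> card C"
  proof -
    have "card D \<le> card {v \<in> C. 2 \<le> deg F v}" unfolding D_def by (rule card_image_le) (use finC in simp)
    also have "\<dots> \<le> card C" using finC by (intro card_mono) auto
    finally show ?thesis .
  qed
  have cUp: "card Up \<le> 1"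
  proof -
    have finUp: "finite Up" using finE unfolding Up_def by simp
    have "\<forall>a1\<in>Up. \<forall>a2\<in>Up. a1 = a2"
    proof (intro ballI, rule ccontr)
      fix a1 a2 assume a1: "a1 \<in> Up" and a2: "a2 \<in> Up" and ne: "a1 \<noteq> a2"
      from a1 obtain v1 where v1: "v1 \<in> V" "2 \<le> deg F v1" "v1 \<notin> C" "hd (ch v1) \<in> C" "a1 = {v1, hd (ch v1)}" "a1 \<in> E"
        unfolding Up_def by auto
      from a2 obtain v2 where v2: "v2 \<in> V" "2 \<le> deg F v2" "v2 \<notin> C" "hd (ch v2) \<in> C" "a2 = {v2, hd (ch v2)}" "a2 \<in> E"
        unfolding Up_def by auto
      have ch1: "child_of F r (hd (ch v1)) v1" by (rule hd_child[OF tree emb v1(1,2)])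
      have ch2: "child_of F r (hd (ch v2)) v2" by (rule hd_child[OF tree emb v2(1,2)])
      have e1: "a1 = {hd (ch v1), v1}" "a2 = {hd (ch v2), v2}" using v1 v2 by auto
      have "connected_in (F - E) (hd (ch v1)) (hd (ch v2))" using conC v1 v2 unfolding E_def by blast
      then have c: "connected_in (F - {a1, a2}) (hd (ch v1)) (hd (ch v2))"
        by (rule conn_mono[rotated]) (use v1 v2 in auto)
      show False
        using K[OF tree_br[OF tree], of "hd (ch v1)" v1 "hd (ch v2)" v2 r] ch1 ch2 c ne e1
        unfolding child_of_def by auto
    qed
    then show ?thesis using card_le_Suc0_iff_eq[OF finUp] by simp
  qed
  have "card {e \<in> E. e \<inter> C \<noteq> {}} \<le> card (D \<union> Up)"
    using sub finE by (intro card_mono) (auto simp: D_def Up_def finC)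
  also have "\<dots> \<le> card D + card Up" by (rule card_Un_le)
  finally show ?thesis using cD cUp unfolding E_def by linarith
qed

lemma comp_conn:
  assumes "C \<in> comps V G"
  shows "C \<subseteq> V \<and> (\<forall>x\<in>C. \<forall>y\<in>C. connected_in G x y)"
  using assms unfolding comps_def by (auto elim!: quotientE intro: conn_trans conn_sym)

theorem mainTheorem5:
  fixes V :: "'a set" and F :: "'a set set" and r :: 'a and ch :: "'a \<Rightarrow> 'a list"
  assumes tree: "is_tree V F"
    and emb: "planar_rooted V F r ch"
    and root_leaf: "deg F r \<le> 1"
  shows "assoc_distributable V F (first_child_edges V F ch) (\<lambda>_. 1)
       \<and> (\<forall>E'. E' \<subseteq> F \<and> E' \<inter> first_child_edges V F ch = {} \<longrightarrow>
            (\<forall>U\<in>comps V (F - E').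
               assoc_distributable U {e \<in> F. e \<subseteq> U}
                 (first_child_edges V F ch \<inter> {e \<in> F. e \<subseteq> U}) (\<lambda>_. 1)))"
proof
  show "assoc_distributable V F (first_child_edges V F ch) (\<lambda>_. 1)"
    unfolding assoc_distributable_def
  proof
    fix C assume "C \<in> comps V (F - first_child_edges V F ch)"
    from comp_conn[OF this] count_lemma[OF tree emb, of C]
    show "int (card {e \<in> first_child_edges V F ch. e \<inter> C \<noteq> {}}) - 1 \<le> sum (\<lambda>_. 1) C"
      by simp
  qed
next
  show "\<forall>E'. E' \<subseteq> F \<and> E' \<inter> first_child_edges V F ch = {} \<longrightarrow>
            (\<forall>U\<in>comps V (F - E').
               assoc_distributable U {e \<in> F. e \<subseteq> U}
                 (first_child_edges V F ch \<inter> {e \<in> F. e \<subseteq> U}) (\<lambda>_. 1))"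
  proof (intro allI impI ballI)
    fix E' U assume U: "U \<in> comps V (F - E')"
    have UV: "U \<subseteq> V" using comp_conn[OF U] by blast
    have finE: "finite (first_child_edges V F ch)" unfolding fce_image
      using tree by (simp add: is_tree_def graph_def)
    show "assoc_distributable U {e \<in> F. e \<subseteq> U}
                 (first_child_edges V F ch \<inter> {e \<in> F. e \<subseteq> U}) (\<lambda>_. 1)"
      unfolding assoc_distributable_def
    proof
      fix C assume C: "C \<in> comps U ({e \<in> F. e \<subseteq> U} - first_child_edges V F ch \<inter> {e \<in> F. e \<subseteq> U})"
      from comp_conn[OF C] have CU: "C \<subseteq> U" and cc:
        "\<forall>x\<in>C. \<forall>y\<in>C. connected_in ({e \<in> F. e \<subseteq> U} - first_child_edges V F ch \<inter> {e \<in> F. e \<subseteq> U}) x y"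
        by auto
      have cc2: "\<forall>x\<in>C. \<forall>y\<in>C. connected_in (F - first_child_edges V F ch) x y"
        using cc conn_mono[of "{e \<in> F. e \<subseteq> U} - first_child_edges V F ch \<inter> {e \<in> F. e \<subseteq> U}"
            "F - first_child_edges V F ch"] by blast
      have "card {e \<in> first_child_edges V F ch \<inter> {e \<in> F. e \<subseteq> U}. e \<inter> C \<noteq> {}}
          \<le> card {e \<in> first_child_edges V F ch. e \<inter> C \<noteq> {}}"
        using finE by (intro card_mono) auto
      also have "\<dots> \<le> card C + 1" using count_lemma[OF tree emb, of C] CU UV cc2 by blast
      finally show "int (card {e \<in> first_child_edges V F ch \<inter> {e \<in> F. e \<subseteq> U}. e \<inter> C \<noteq> {}}) - 1
          \<le> sum (\<lambda>_. 1) C" by simp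
    qed
  qed
qed

end
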